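(* Let $m$ be an even positive integer, let $q,k$ be positive integers, and put $n=q(k-1)+1$. Let ${\bf h}=(h_0,h_1,\dots,h_{qm(k-1)})^\top\in\mathbb{R}^{qm(k-1)+1}$ (note $qm(k-1)+1=m(n-1)+1$). Let $\mathcal{H}_m$ be the $m^{\rm th}$-order $n$-dimensional Hankel tensor with entries $(\mathcal{H}_m)_{i_1\dots i_m}=h_{i_1+\dots+i_m}$ ($0\le i_j\le n-1$), and let $\mathcal{H}_{qm}$ be the $(qm)^{\rm th}$-order $k$-dimensional Hankel tensor with entries $(\mathcal{H}_{qm})_{i_1\dots i_{qm}}=h_{i_1+\dots+i_{qm}}$ ($0\le i_j\le k-1$). Then: (i) if $\mathcal{H}_m$ is positive semi-definite (resp. positive definite, negative semi-definite, negative definite), then $\mathcal{H}_{qm}$ is positive semi-definite (resp. positive definite, negative semi-definite, negative definite); (ii) if $\mathcal{H}_m$ is an SOS tensor, then $\mathcal{H}_{qm}$ is an SOS tensor, and the SOS rank of $\mathcal{H}_{qm}$ is no larger than the SOS rank of $\mathcal{H}_m$.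
   Context: For a real $m^{\rm th}$-order $n$-dimensional tensor $\mathcal{T}$ with $m$ even, $\mathcal{T}{\bf x}^m=\sum_{i_1,\dots,i_m}\mathcal{T}_{i_1\dots i_m}x_{i_1}\cdots x_{i_m}$. $\mathcal{T}$ is positive semi-definite (positive definite, negative semi-definite, negative definite) if $\mathcal{T}{\bf x}^m\ge 0$ ($>0$, $\le 0$, $<0$) for all nonzero ${\bf x}\in\mathbb{R}^n$. $\mathcal{T}$ is an SOS tensor if the polynomial $\mathcal{T}{\bf x}^m$ is a sum of squares of real polynomials; its SOS rank is the minimum number of squares in such a representation. *)

theory Defs
  imports Complex_Main
begin

text \<open>Real m-th order n-dimensional tensors are functions from index lists
  (of length m, entries in {0..n-1}) to reals. Vectors in R^n are functions
  nat => real, only the coordinates 0..n-1 matter.\<close>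

definition index_tuples :: "nat \<Rightarrow> nat \<Rightarrow> nat list set" where
  "index_tuples m n = {is. length is = m \<and> set is \<subseteq> {..<n}}"

definition tensor_form :: "nat \<Rightarrow> nat \<Rightarrow> (nat list \<Rightarrow> real) \<Rightarrow> (nat \<Rightarrow> real) \<Rightarrow> real" where
  "tensor_form m n T x = (\<Sum>is\<in>index_tuples m n. T is * (\<Prod>j<m. x (is ! j)))"

definition nonzero_vec :: "nat \<Rightarrow> (nat \<Rightarrow> real) \<Rightarrow> bool" where
  "nonzero_vec n x \<longleftrightarrow> (\<exists>i<n. x i \<noteq> 0)"

definition psd_tensor :: "nat \<Rightarrow> nat \<Rightarrow> (nat list \<Rightarrow> real) \<Rightarrow> bool" where
  "psd_tensor m n T \<longleftrightarrow> (\<forall>x. nonzero_vec n x \<longrightarrow> tensor_form m n T x \<ge> 0)"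

definition pd_tensor :: "nat \<Rightarrow> nat \<Rightarrow> (nat list \<Rightarrow> real) \<Rightarrow> bool" where
  "pd_tensor m n T \<longleftrightarrow> (\<forall>x. nonzero_vec n x \<longrightarrow> tensor_form m n T x > 0)"

definition nsd_tensor :: "nat \<Rightarrow> nat \<Rightarrow> (nat list \<Rightarrow> real) \<Rightarrow> bool" where
  "nsd_tensor m n T \<longleftrightarrow> (\<forall>x. nonzero_vec n x \<longrightarrow> tensor_form m n T x \<le> 0)"

definition nd_tensor :: "nat \<Rightarrow> nat \<Rightarrow> (nat list \<Rightarrow> real) \<Rightarrow> bool" where
  "nd_tensor m n T \<longleftrightarrow> (\<forall>x. nonzero_vec n x \<longrightarrow> tensor_form m n T x < 0)"

inductive_set poly_fun :: "nat \<Rightarrow> ((nat \<Rightarrow> real) \<Rightarrow> real) set" for n :: nat where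
  pf_const: "(\<lambda>x. c) \<in> poly_fun n"
| pf_var: "i < n \<Longrightarrow> (\<lambda>x. x i) \<in> poly_fun n"
| pf_add: "p \<in> poly_fun n \<Longrightarrow> q \<in> poly_fun n \<Longrightarrow> (\<lambda>x. p x + q x) \<in> poly_fun n"
| pf_mult: "p \<in> poly_fun n \<Longrightarrow> q \<in> poly_fun n \<Longrightarrow> (\<lambda>x. p x * q x) \<in> poly_fun n"

definition sos_rep :: "nat \<Rightarrow> nat \<Rightarrow> (nat list \<Rightarrow> real) \<Rightarrow> nat \<Rightarrow> bool" where
  "sos_rep m n T r \<longleftrightarrow> (\<exists>p. (\<forall>j<r. p j \<in> poly_fun n) \<and>
      (\<forall>x. tensor_form m n T x = (\<Sum>j<r. (p j x)^2)))"

definition sos_tensor :: "nat \<Rightarrow> nat \<Rightarrow> (nat list \<Rightarrow> real) \<Rightarrow> bool" where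
  "sos_tensor m n T \<longleftrightarrow> (\<exists>r. sos_rep m n T r)"

definition sos_rank :: "nat \<Rightarrow> nat \<Rightarrow> (nat list \<Rightarrow> real) \<Rightarrow> nat" where
  "sos_rank m n T = (LEAST r. sos_rep m n T r)"

definition hankel :: "(nat \<Rightarrow> real) \<Rightarrow> nat list \<Rightarrow> real" where
  "hankel h is = h (sum_list is)"

end

theory Submission
  imports Defs "HOL-Computational_Algebra.Polynomial"
begin

lemma prod_nth_list: "(\<Prod>j<length xs. x (xs ! j)) = prod_list (map x xs)"
  by (induction xs) (simp_all add: prod.lessThan_Suc_shift del: prod.lessThan_Suc)

lemma finite_idx: "finite (index_tuples m n)"
proof -
  have "index_tuples m n = {xs. set xs \<subseteq> {..<n} \<and> length xs = m}"
    by (auto simp: index_tuples_def)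
  thus ?thesis using finite_lists_length_eq[of "{..<n}" m] by simp
qed

lemma idx0: "index_tuples 0 n = {[]}"
  by (auto simp: index_tuples_def)

lemma idxSuc: "index_tuples (Suc m) n = (\<lambda>(i,is). i#is) ` ({..<n} \<times> index_tuples m n)"
  by (auto simp: index_tuples_def length_Suc_conv image_iff)

lemma sum_idxSuc:
  "(\<Sum>is\<in>index_tuples (Suc m) n. F is) = (\<Sum>i<n. \<Sum>is\<in>index_tuples m n. F (i#is))"
proof -
  have inj: "inj_on (\<lambda>(i,is). i#is) ({..<n} \<times> index_tuples m n)"
    by (auto simp: inj_on_def)
  have "(\<Sum>is\<in>index_tuples (Suc m) n. F is) = (\<Sum>p\<in>{..<n} \<times> index_tuples m n. F ((\<lambda>(i,is). i#is) p))"
    unfolding idxSuc by (rule sum.reindex[OF inj, unfolded comp_def])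
  also have "\<dots> = (\<Sum>i<n. \<Sum>is\<in>index_tuples m n. F (i#is))"
    by (simp add: sum.cartesian_product split_def)
  finally show ?thesis .
qed

lemma tensor_form_list:
  "tensor_form m n T x = (\<Sum>is\<in>index_tuples m n. T is * prod_list (map x is))"
  unfolding tensor_form_def
  by (rule sum.cong) (auto simp: index_tuples_def prod_nth_list[symmetric])

definition LL :: "(nat \<Rightarrow> real) \<Rightarrow> nat \<Rightarrow> real poly \<Rightarrow> real" where
  "LL h a f = (\<Sum>s<Suc (degree f). h (a+s) * coeff f s)"

lemma LL_ext: "degree f < N \<Longrightarrow> LL h a f = (\<Sum>s<N. h (a+s) * coeff f s)"
  unfolding LL_def
  by (rule sum.mono_neutral_left) (auto simp: coeff_eq_0)

lemma LL_add: "LL h a (f + g) = LL h a f + LL h a g"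
proof -
  let ?N = "Suc (degree f + degree g)"
  have "degree (f+g) < ?N" using degree_add_le_max[of f g] by simp
  hence "LL h a (f+g) = (\<Sum>s<?N. h (a+s) * coeff (f+g) s)" by (rule LL_ext)
  also have "\<dots> = (\<Sum>s<?N. h (a+s) * coeff f s) + (\<Sum>s<?N. h (a+s) * coeff g s)"
    by (simp add: distrib_left sum.distrib)
  also have "\<dots> = LL h a f + LL h a g"
    using LL_ext[of f ?N h a] LL_ext[of g ?N h a] by simp
  finally show ?thesis .
qed

lemma LL_smult: "LL h a (smult c f) = c * LL h a f"
proof -
  have "degree (smult c f) < Suc (degree f)" by simp
  hence "LL h a (smult c f) = (\<Sum>s<Suc (degree f). h (a+s) * coeff (smult c f) s)" by (rule LL_ext)
  thus ?thesis by (simp add: LL_def sum_distrib_left algebra_simps)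
qed

lemma LL_zero: "LL h a 0 = 0"
  by (simp add: LL_def)

lemma LL_sum: "LL h a (\<Sum>i\<in>A. f i) = (\<Sum>i\<in>A. LL h a (f i))"
  by (induction A rule: infinite_finite_induct) (simp_all add: LL_zero LL_add)

lemma LL_pCons: "LL h a (pCons c p) = h a * c + LL h (Suc a) p"
proof -
  have "degree (pCons c p) < Suc (Suc (degree p))" using degree_pCons_le[of c p] by simp
  hence "LL h a (pCons c p) = (\<Sum>s<Suc (Suc (degree p)). h (a+s) * coeff (pCons c p) s)" by (rule LL_ext)
  also have "\<dots> = h a * c + (\<Sum>s<Suc (degree p). h (Suc a + s) * coeff p s)"
    by (simp add: sum.lessThan_Suc_shift del: sum.lessThan_Suc)
  finally show ?thesis by (simp add: LL_def)
qed

lemma LL_monom: "LL h a (monom 1 i * g) = LL h (a+i) g"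
proof (induction i arbitrary: a)
  case 0 then show ?case by simp
next
  case (Suc i)
  have "monom 1 (Suc i) * g = pCons 0 (monom 1 i * g)" by (simp add: monom_Suc)
  then show ?case using Suc by (simp add: LL_pCons)
qed

definition PP :: "nat \<Rightarrow> (nat \<Rightarrow> real) \<Rightarrow> real poly" where
  "PP n y = (\<Sum>i<n. monom (y i) i)"

lemma coeff_PP: "coeff (PP n y) j = (if j < n then y j else 0)"
  by (simp add: PP_def coeff_sum coeff_monom)

lemma degree_PP: "degree (PP n y) \<le> n - 1"
  unfolding PP_def by (rule degree_sum_le) (auto intro: order.trans[OF degree_monom_le])

lemma main_identity:
  "(\<Sum>is\<in>index_tuples m n. h (a + sum_list is) * prod_list (map y is)) = LL h a (PP n y ^ m)"
proof (induction m arbitrary: a)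
  case 0
  show ?case by (simp add: idx0 LL_def)
next
  case (Suc m)
  have "(\<Sum>is\<in>index_tuples (Suc m) n. h (a + sum_list is) * prod_list (map y is))
      = (\<Sum>i<n. y i * (\<Sum>is\<in>index_tuples m n. h ((a+i) + sum_list is) * prod_list (map y is)))"
    by (simp add: sum_idxSuc sum_distrib_left algebra_simps)
  also have "\<dots> = (\<Sum>i<n. y i * LL h (a+i) (PP n y ^ m))" using Suc by simp
  also have "\<dots> = (\<Sum>i<n. LL h a (smult (y i) (monom 1 i * PP n y ^ m)))"
    by (simp add: LL_smult LL_monom)
  also have "\<dots> = LL h a (\<Sum>i<n. smult (y i) (monom 1 i * PP n y ^ m))"
    by (simp add: LL_sum)
  also have "(\<Sum>i<n. smult (y i) (monom 1 i * PP n y ^ m)) = PP n y ^ Suc m"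
    by (simp add: PP_def sum_distrib_right smult_monom_mult)
  finally show ?case .
qed

lemma tensor_LL: "tensor_form m n (hankel h) y = LL h 0 (PP n y ^ m)"
  using main_identity[where h=h and a=0 and m=m and n=n and y=y] by (simp add: tensor_form_list hankel_def)

lemma PP_coeff: assumes "degree f < n" shows "PP n (coeff f) = f"
  by (rule poly_eqI) (use assms in \<open>auto simp: coeff_PP coeff_eq_0\<close>)

lemma poly_fun_sum: "finite A \<Longrightarrow> (\<And>i. i \<in> A \<Longrightarrow> f i \<in> poly_fun k) \<Longrightarrow> (\<lambda>x. \<Sum>i\<in>A. f i x) \<in> poly_fun k"
  by (induction A rule: finite_induct) (auto intro: poly_fun.intros)

lemma coeff_PP_poly: "(\<lambda>x. coeff (PP k x) j) \<in> poly_fun k"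
  by (cases "j < k") (auto simp: coeff_PP intro: poly_fun.intros)

lemma coeff_pow_poly: "(\<lambda>x. coeff (PP k x ^ q) j) \<in> poly_fun k"
proof (induction q arbitrary: j)
  case 0
  show ?case by (simp add: poly_fun.pf_const)
next
  case (Suc q)
  have "(\<lambda>x. \<Sum>i\<le>j. coeff (PP k x) i * coeff (PP k x ^ q) (j - i)) \<in> poly_fun k"
    by (rule poly_fun_sum) (auto intro: poly_fun.pf_mult coeff_PP_poly Suc)
  then show ?case by (simp add: coeff_mult)
qed

lemma poly_fun_comp: "g \<in> poly_fun n \<Longrightarrow> (\<And>i. i < n \<Longrightarrow> (\<lambda>x. Y x i) \<in> poly_fun k) \<Longrightarrow> (\<lambda>x. g (Y x)) \<in> poly_fun k"
  by (induction g rule: poly_fun.induct) (auto intro: poly_fun.intros)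

lemma key:
  assumes "k > 0" "n = q * (k - 1) + 1"
  shows "tensor_form (q*m) k (hankel h) x = tensor_form m n (hankel h) (coeff (PP k x ^ q))"
proof -
  have "degree (PP k x ^ q) \<le> (k-1) * q"
    using degree_power_le[of "PP k x" q] degree_PP[of k x] mult_le_mono1 order_trans by blast
  hence "degree (PP k x ^ q) < n" using assms by (simp add: mult.commute)
  hence "PP n (coeff (PP k x ^ q)) = PP k x ^ q" by (rule PP_coeff)
  thus ?thesis by (simp add: tensor_LL power_mult)
qed

lemma nonzero_key:
  assumes "k > 0" "n = q * (k - 1) + 1" "nonzero_vec k x"
  shows "nonzero_vec n (coeff (PP k x ^ q))"
proof -
  obtain i where i: "i < k" "x i \<noteq> 0" using assms(3) by (auto simp: nonzero_vec_def)
  hence "PP k x \<noteq> 0" by (metis coeff_PP coeff_0)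
  hence nz: "PP k x ^ q \<noteq> 0" by simp
  have "degree (PP k x ^ q) \<le> (k-1) * q"
    using degree_power_le[of "PP k x" q] degree_PP[of k x] mult_le_mono1 order_trans by blast
  hence "degree (PP k x ^ q) < n" using assms by (simp add: mult.commute)
  moreover have "coeff (PP k x ^ q) (degree (PP k x ^ q)) \<noteq> 0" using nz by simp
  ultimately show ?thesis unfolding nonzero_vec_def by blast
qed

theorem theorem1:
  fixes m q k n :: nat and h :: "nat \<Rightarrow> real"
  assumes "even m" and "m > 0" and "q > 0" and "k > 0"
    and "n = q * (k - 1) + 1"
  shows "(psd_tensor m n (hankel h) \<longrightarrow> psd_tensor (q * m) k (hankel h))
       \<and> (pd_tensor m n (hankel h) \<longrightarrow> pd_tensor (q * m) k (hankel h))
       \<and> (nsd_tensor m n (hankel h) \<longrightarrow> nsd_tensor (q * m) k (hankel h))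
       \<and> (nd_tensor m n (hankel h) \<longrightarrow> nd_tensor (q * m) k (hankel h))
       \<and> (sos_tensor m n (hankel h) \<longrightarrow>
            sos_tensor (q * m) k (hankel h) \<and>
            sos_rank (q * m) k (hankel h) \<le> sos_rank m n (hankel h))"
proof -
  note K = key[OF assms(4,5)] and NZ = nonzero_key[OF assms(4,5)]
  have rep: "sos_rep (q*m) k (hankel h) r" if R: "sos_rep m n (hankel h) r" for r
  proof -
    obtain p where p: "\<forall>j<r. p j \<in> poly_fun n" "\<forall>y. tensor_form m n (hankel h) y = (\<Sum>j<r. (p j y)^2)"
      using R unfolding sos_rep_def by blast
    show ?thesis unfolding sos_rep_def
    proof (intro exI[of _ "\<lambda>j x. p j (coeff (PP k x ^ q))"] conjI allI impI)
      fix j assume "j < r"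
      thus "(\<lambda>x. p j (coeff (PP k x ^ q))) \<in> poly_fun k"
        using p(1) by (auto intro: poly_fun_comp coeff_pow_poly)
    next
      fix x show "tensor_form (q*m) k (hankel h) x = (\<Sum>j<r. (p j (coeff (PP k x ^ q)))^2)"
        using K p(2) by simp
    qed
  qed
  have sos: "sos_tensor (q * m) k (hankel h) \<and> sos_rank (q * m) k (hankel h) \<le> sos_rank m n (hankel h)"
    if "sos_tensor m n (hankel h)"
  proof -
    have "sos_rep m n (hankel h) (sos_rank m n (hankel h))"
      using that unfolding sos_tensor_def sos_rank_def by (rule LeastI_ex)
    hence "sos_rep (q*m) k (hankel h) (sos_rank m n (hankel h))" by (rule rep)
    thus ?thesis unfolding sos_tensor_def sos_rank_def by (auto intro: Least_le)
  qed
  show ?thesis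
    using sos K NZ
    unfolding psd_tensor_def pd_tensor_def nsd_tensor_def nd_tensor_def
    by metis
qed

end
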